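(* Consider the $2\times 1$ merge network with parameters $c>0$, $k>0$, $\eta\in(0,\tfrac12)$, constant downstream queue length $Q\ge0$, upstream capacities $c_1=c$, $c_2=kc$, inflows $f_i=\eta c_i$, and weights $\gamma_0,\gamma_1,\gamma_2>0$, operated under the generalized backpressure rule, in regime R1 with unsaturated upstream queue $u$ and saturated upstream queue $s$. Suppose that at time $t\ge1$, $p_{max}(t)=p_s(t)$ and the saturated queue is the one activated, i.e. $i^*(t)=s$. Then: (a) if $q_u(t)>f_u$, then $\tilde p_{max}(t+2)<p_{max}(t)$; (b) if $q_u(t)=f_u$ and $\Delta p(t)=0$, then $i^*(t+1)=i^*(t+2)=u$. In other words, $q_s$ is activated at most once consecutively and it is followed by two activations of $q_u$.
   Context: Model: discrete time; two upstream queues $q_1(t),q_2(t)\ge0$ merge into a downstream queue of constant length $Q$. Priorities: $p_i(t)=(\gamma_i q_i(t)-\gamma_0 Q)c_i$. At each step exactly one upstream queue, denoted $i^*(t)$, is activated, one of maximal priority (ties broken arbitrarily); the activated queue evolves as $q_i(t+1)=q_i(t)-\min(q_i(t),c_i)+f_i$, the other as $q_j(t+1)=q_j(t)+f_j$. $p_{max}(t)=\max_i p_i(t)$; $\tilde p_{max}(t)=\min_{v\in\{t-1,t\}}p_{max}(v)$; $\Delta p(t)=p_{i^*(t)}(t)-p_j(t)$ with $j$ the non-activated queue. $f_u$ is the minimal possible length $q_{u,min}$ of queue $u$. Regime R1: exactly one upstream queue, $u$, is unsaturated (outflow $\min(q_u,c_u)<c_u$), the other, $s$, is saturated (outflow equal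 to $c_s$ when activated). *)

theory Defs
  imports Complex_Main
begin

text \<open>Upstream queues are indexed by 1 and 2; index 0 is used
for the downstream weight gamma_0. q i t is the length of upstream queue i at time t,
cap i is its capacity c_i, f i its inflow, act t the activated queue i^*(t).\<close>

definition other :: "nat \<Rightarrow> nat" where
  "other i = (if i = 1 then 2 else 1)"

definition prio :: "(nat \<Rightarrow> real) \<Rightarrow> real \<Rightarrow> (nat \<Rightarrow> real) \<Rightarrow> (nat \<Rightarrow> nat \<Rightarrow> real)
                     \<Rightarrow> nat \<Rightarrow> nat \<Rightarrow> real" where
  "prio \<gamma> Q cap q i t = (\<gamma> i * q i t - \<gamma> 0 * Q) * cap i"

definition pmax :: "(nat \<Rightarrow> real) \<Rightarrow> real \<Rightarrow> (nat \<Rightarrow> real) \<Rightarrow> (nat \<Rightarrow> nat \<Rightarrow> real)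
                     \<Rightarrow> nat \<Rightarrow> real" where
  "pmax \<gamma> Q cap q t = max (prio \<gamma> Q cap q 1 t) (prio \<gamma> Q cap q 2 t)"

text \<open>tilde p_max(t) = min over v in {t-1, t} of p_max(v) (meaningful for t >= 1).\<close>
definition ptilde :: "(nat \<Rightarrow> real) \<Rightarrow> real \<Rightarrow> (nat \<Rightarrow> real) \<Rightarrow> (nat \<Rightarrow> nat \<Rightarrow> real)
                     \<Rightarrow> nat \<Rightarrow> real" where
  "ptilde \<gamma> Q cap q t = min (pmax \<gamma> Q cap q (t - 1)) (pmax \<gamma> Q cap q t)"

definition dp :: "(nat \<Rightarrow> real) \<Rightarrow> real \<Rightarrow> (nat \<Rightarrow> real) \<Rightarrow> (nat \<Rightarrow> nat \<Rightarrow> real)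
                     \<Rightarrow> (nat \<Rightarrow> nat) \<Rightarrow> nat \<Rightarrow> real" where
  "dp \<gamma> Q cap q act t = prio \<gamma> Q cap q (act t) t - prio \<gamma> Q cap q (other (act t)) t"

definition gbp :: "(nat \<Rightarrow> real) \<Rightarrow> real \<Rightarrow> (nat \<Rightarrow> real) \<Rightarrow> (nat \<Rightarrow> real)
                    \<Rightarrow> (nat \<Rightarrow> nat \<Rightarrow> real) \<Rightarrow> (nat \<Rightarrow> nat) \<Rightarrow> bool" where
  "gbp \<gamma> Q cap f q act \<longleftrightarrow>
     (\<forall>t. \<forall>i\<in>{1,2}. q i t \<ge> 0) \<and>
     (\<forall>t. act t \<in> {1,2} \<and>
          (\<forall>i\<in>{1,2}. prio \<gamma> Q cap q i t \<le> prio \<gamma> Q cap q (act t) t) \<and>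
          q (act t) (t+1) = q (act t) t - min (q (act t) t) (cap (act t)) + f (act t) \<and>
          q (other (act t)) (t+1) = q (other (act t)) t + f (other (act t)))"

definition regime_R1 :: "(nat \<Rightarrow> real) \<Rightarrow> (nat \<Rightarrow> nat \<Rightarrow> real) \<Rightarrow> (nat \<Rightarrow> nat)
                          \<Rightarrow> nat \<Rightarrow> nat \<Rightarrow> bool" where
  "regime_R1 cap q act u s \<longleftrightarrow>
     {u, s} = {1, 2} \<and> u \<noteq> s \<and>
     (\<forall>t. min (q u t) (cap u) < cap u) \<and>
     (\<forall>t. act t = s \<longrightarrow> min (q s t) (cap s) = cap s)"

end

theory Submission
  imports Defs
begin

theorem corollary1:
  fixes c k \<eta> Q :: real and cap f \<gamma> :: "nat \<Rightarrow> real"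
    and q :: "nat \<Rightarrow> nat \<Rightarrow> real" and act :: "nat \<Rightarrow> nat"
    and u s t :: nat
  assumes "c > 0" and "k > 0" and "0 < \<eta>" and "\<eta> < 1/2" and "Q \<ge> 0"
    and "cap 1 = c" and "cap 2 = k * c"
    and "f 1 = \<eta> * cap 1" and "f 2 = \<eta> * cap 2"
    and "\<gamma> 0 > 0" and "\<gamma> 1 > 0" and "\<gamma> 2 > 0"
    and "gbp \<gamma> Q cap f q act"
    and "regime_R1 cap q act u s"
    and "t \<ge> 1"
    and "pmax \<gamma> Q cap q t = prio \<gamma> Q cap q s t"
    and "act t = s"
  shows "(q u t > f u \<longrightarrow> ptilde \<gamma> Q cap q (t + 2) < pmax \<gamma> Q cap q t)
       \<and> (q u t = f u \<and> dp \<gamma> Q cap q act t = 0 \<longrightarrow> act (t + 1) = u \<and> act (t + 2) = u)"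
proof -
  have us: "{u, s} = {1, 2}" "u \<noteq> s"
    and qu0: "\<And>t. min (q u t) (cap u) < cap u"
    and qs: "\<And>t. act t = s \<Longrightarrow> min (q s t) (cap s) = cap s"
    using assms(14) unfolding regime_R1_def by blast+
  have qu: "q u n < cap u" for n
  proof -
    have "min (q u n) (cap u) < cap u" by (rule qu0)
    then show ?thesis by (cases "q u n \<le> cap u") (simp_all add: min_def)
  qed
  have g: "\<And>t. act t \<in> {1,2} \<and>
          (\<forall>i\<in>{1,2}. prio \<gamma> Q cap q i t \<le> prio \<gamma> Q cap q (act t) t) \<and>
          q (act t) (t+1) = q (act t) t - min (q (act t) t) (cap (act t)) + f (act t) \<and>
          q (other (act t)) (t+1) = q (other (act t)) t + f (other (act t))"
    using assms(13) unfolding gbp_def by blast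
  have uv: "(u = 1 \<and> s = 2) \<or> (u = 2 \<and> s = 1)" using us by (metis doubleton_eq_iff)
  have os: "other s = u" and ou: "other u = s" using uv by (auto simp: other_def)
  have capp: "cap u > 0" "cap s > 0" "\<gamma> u > 0" "\<gamma> s > 0"
    "f u = \<eta> * cap u" "f s = \<eta> * cap s"
    using uv assms(1,2,6-12) by (auto)
  have actus: "\<And>t. act t = u \<or> act t = s" using g us(1) by blast
  have maxp: "\<And>t. prio \<gamma> Q cap q u t \<le> prio \<gamma> Q cap q (act t) t \<and> prio \<gamma> Q cap q s t \<le> prio \<gamma> Q cap q (act t) t"
  proof -
    fix t
    have "\<forall>i\<in>{1,2}. prio \<gamma> Q cap q i t \<le> prio \<gamma> Q cap q (act t) t" using g[of t] by blast
    then have "\<forall>i\<in>{u,s}. prio \<gamma> Q cap q i t \<le> prio \<gamma> Q cap q (act t) t" using us(1) by simp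
    then show "prio \<gamma> Q cap q u t \<le> prio \<gamma> Q cap q (act t) t \<and> prio \<gamma> Q cap q s t \<le> prio \<gamma> Q cap q (act t) t" by simp
  qed
  define A where "A = \<gamma> s * cap s * cap s"
  define B where "B = \<gamma> u * cap u * cap u"
  have Ap: "A > 0" "B > 0" using capp by (auto simp: A_def B_def)
  have Ae: "\<eta>*A < (1-\<eta>)*A" using Ap \<open>\<eta> < 1/2\<close> by (intro mult_strict_right_mono) auto
  have stepS: "prio \<gamma> Q cap q s (n+1) = prio \<gamma> Q cap q s n - (1 - \<eta>) * A"
     "prio \<gamma> Q cap q u (n+1) = prio \<gamma> Q cap q u n + \<eta> * B" if "act n = s" for n
  proof -
    have "q s (n+1) = q s n - cap s + f s" using g[of n] qs[OF that] that by simp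
    then show "prio \<gamma> Q cap q s (n+1) = prio \<gamma> Q cap q s n - (1 - \<eta>) * A"
      by (simp only: prio_def A_def capp) (simp add: algebra_simps)
    have "q u (n+1) = q u n + f u" using g[of n] that os by simp
    then show "prio \<gamma> Q cap q u (n+1) = prio \<gamma> Q cap q u n + \<eta> * B"
      by (simp only: prio_def B_def capp) (simp add: algebra_simps)
  qed
  have stepU: "prio \<gamma> Q cap q s (n+1) = prio \<gamma> Q cap q s n + \<eta> * A"
     "prio \<gamma> Q cap q u (n+1) = (\<gamma> u * f u - \<gamma> 0 * Q) * cap u" if "act n = u" for n
  proof -
    have "q s (n+1) = q s n + f s" using g[of n] that ou by simp
    then show "prio \<gamma> Q cap q s (n+1) = prio \<gamma> Q cap q s n + \<eta> * A"
      by (simp only: prio_def A_def capp) (simp add: algebra_simps)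
    have "min (q u n) (cap u) = q u n" using qu[of n] by simp
    then have "q u (n+1) = f u" using g[of n] that by simp
    then show "prio \<gamma> Q cap q u (n+1) = (\<gamma> u * f u - \<gamma> 0 * Q) * cap u"
      by (simp add: prio_def)
  qed
  have pt: "pmax \<gamma> Q cap q t = prio \<gamma> Q cap q s t" by fact
  have pm: "\<And>n. pmax \<gamma> Q cap q n = max (prio \<gamma> Q cap q u n) (prio \<gamma> Q cap q s n)"
    using uv unfolding pmax_def by (auto simp: max.commute)
  have pus: "prio \<gamma> Q cap q u t \<le> prio \<gamma> Q cap q s t" using pt pm[of t] by simp
  have partA: "ptilde \<gamma> Q cap q (t + 2) < pmax \<gamma> Q cap q t" if "q u t > f u"
  proof (cases "act (t+1) = s")
    case True
    have "pmax \<gamma> Q cap q (t+1) = prio \<gamma> Q cap q s (t+1)"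
      using maxp[of "t+1"] True pm[of "t+1"] by simp
    then have "pmax \<gamma> Q cap q (t+1) < pmax \<gamma> Q cap q t"
      using stepS(1)[OF assms(17)] Ap \<open>\<eta> < 1/2\<close> pt by simp
    then show ?thesis unfolding ptilde_def by simp
  next
    case False
    then have au: "act (t+1) = u" using actus by blast
    have e: "prio \<gamma> Q cap q u (t+2) = (\<gamma> u * f u - \<gamma> 0 * Q) * cap u"
      using stepU(2)[OF au] by simp
    have d: "prio \<gamma> Q cap q u t - prio \<gamma> Q cap q u (t+2) = (\<gamma> u * cap u) * (q u t - f u)"
      unfolding e by (simp add: prio_def algebra_simps)
    have "(\<gamma> u * cap u) * (q u t - f u) > 0" using that capp by simp
    then have "prio \<gamma> Q cap q u (t+2) < prio \<gamma> Q cap q u t" using d by linarith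
    moreover have "prio \<gamma> Q cap q s (t+2) < prio \<gamma> Q cap q s t"
    proof -
      have "prio \<gamma> Q cap q s (t+2) = prio \<gamma> Q cap q s t - (1-\<eta>)*A + \<eta>*A"
        using stepU(1)[OF au] stepS(1)[OF assms(17)] by simp
      then show ?thesis using Ae by linarith
    qed
    ultimately have "pmax \<gamma> Q cap q (t+2) < pmax \<gamma> Q cap q t"
      using pm[of "t+2"] pt pus by simp
    then show ?thesis unfolding ptilde_def by simp
  qed
  have partB: "act (t + 1) = u \<and> act (t + 2) = u"
    if h: "q u t = f u" "dp \<gamma> Q cap q act t = 0"
  proof -
    have eq: "prio \<gamma> Q cap q u t = prio \<gamma> Q cap q s t"
      using h(2) assms(17) os unfolding dp_def by simp
    have l1: "prio \<gamma> Q cap q s (t+1) < prio \<gamma> Q cap q u (t+1)"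
    proof -
      have "\<eta>*B > 0" "(1-\<eta>)*A > 0" using Ap \<open>\<eta> < 1/2\<close> \<open>0 < \<eta>\<close> by simp_all
      then show ?thesis using stepS[OF assms(17)] eq by linarith
    qed
    have a1: "act (t+1) = u"
    proof (rule ccontr)
      assume "act (t+1) \<noteq> u"
      then have "act (t+1) = s" using actus by blast
      then show False using maxp[of "t+1"] l1 by simp
    qed
    have "prio \<gamma> Q cap q u (t+2) = prio \<gamma> Q cap q u t"
      using stepU(2)[OF a1] h(1) by (simp add: prio_def)
    moreover have "prio \<gamma> Q cap q s (t+2) < prio \<gamma> Q cap q s t"
    proof -
      have "prio \<gamma> Q cap q s (t+2) = prio \<gamma> Q cap q s t - (1-\<eta>)*A + \<eta>*A"
        using stepU(1)[OF a1] stepS(1)[OF assms(17)] by simp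
      then show ?thesis using Ae by linarith
    qed
    ultimately have l2: "prio \<gamma> Q cap q s (t+2) < prio \<gamma> Q cap q u (t+2)" using eq by simp
    have "act (t+2) = u"
    proof (rule ccontr)
      assume "act (t+2) \<noteq> u"
      then have "act (t+2) = s" using actus by blast
      then show False using maxp[of "t+2"] l2 by simp
    qed
    with a1 show ?thesis by simp
  qed
  show ?thesis using partA partB by blast
qed

end
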